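(* Let $n\ge3$. For a non-degenerate $n$-gon $Z=(z_1,\dots,z_n)$ put $a_i=[z_i-z_{i-1},z_{i+1}-z_i]$, and for $k=1,\dots,n$ let $W_k=(w_{1k},\dots,w_{nk})$ be the tangent vector at $Z$ with $w_{ik}=0$ for $i\notin\{k,k+1\}$, $w_{k,k}=a_{k+1}(z_k-z_{k-1})$ and $w_{k+1,k}=a_k(z_{k+2}-z_{k+1})$. Then at every $Z\in U_n$ the vectors $W_1,\dots,W_n$ are linearly independent and span the fiber $F(Z)$ of the dual Birkhoff distribution.
   Context: $[\cdot,\cdot]$ is the determinant of two plane vectors; indices are cyclic. $G_n$ is the set of $n$-gons in $\mathbb R^2$ with $z_i\ne z_{i+1}$ for all $i$; $U_n\subset G_n$ is the open set of non-degenerate $n$-gons (no three consecutive vertices collinear). The dual Birkhoff distribution $\mathcal F$ on $G_n$: a tangent vector $W=(w_1,\dots,w_n)$ (velocities of the vertices) lies in $\mathcal F$ iff for each $i$ the induced motion of the line $z_iz_{i+1}$ is an infinitesimal rotation about the midpoint of $z_iz_{i+1}$; equivalently $[w_i+w_{i+1},z_{i+1}-z_i]=0$ for all $i$. $F(Z)$ denotes the fiber of $\mathcal F$ at $Z$. *)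

theory Defs
  imports "HOL-Analysis.Analysis"
begin

text \<open>Plane vectors are real^2; polygons and tangent vectors are maps nat => real^2,
  vertices indexed 0..n-1, indices taken cyclically (mod n).\<close>

definition det2 :: "real^2 \<Rightarrow> real^2 \<Rightarrow> real" where
  "det2 u v = u$1 * v$2 - u$2 * v$1"

definition vtx :: "nat \<Rightarrow> (nat \<Rightarrow> real^2) \<Rightarrow> int \<Rightarrow> real^2" where
  "vtx n Z i = Z (nat (i mod int n))"

definition in_G :: "nat \<Rightarrow> (nat \<Rightarrow> real^2) \<Rightarrow> bool" where
  "in_G n Z \<longleftrightarrow> (\<forall>i<n. vtx n Z (int i) \<noteq> vtx n Z (int i + 1))"

definition in_U :: "nat \<Rightarrow> (nat \<Rightarrow> real^2) \<Rightarrow> bool" where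
  "in_U n Z \<longleftrightarrow> in_G n Z \<and>
     (\<forall>i<n. det2 (vtx n Z (int i) - vtx n Z (int i - 1)) (vtx n Z (int i + 1) - vtx n Z (int i)) \<noteq> 0)"

definition tangent_vec :: "nat \<Rightarrow> (nat \<Rightarrow> real^2) \<Rightarrow> bool" where
  "tangent_vec n w \<longleftrightarrow> (\<forall>i\<ge>n. w i = 0)"

definition birkhoff_fiber :: "nat \<Rightarrow> (nat \<Rightarrow> real^2) \<Rightarrow> (nat \<Rightarrow> real^2) set" where
  "birkhoff_fiber n Z = {w. tangent_vec n w \<and>
     (\<forall>i<n. det2 (vtx n w (int i) + vtx n w (int i + 1)) (vtx n Z (int i + 1) - vtx n Z (int i)) = 0)}"

definition a_coef :: "nat \<Rightarrow> (nat \<Rightarrow> real^2) \<Rightarrow> int \<Rightarrow> real" where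
  "a_coef n Z i = det2 (vtx n Z i - vtx n Z (i - 1)) (vtx n Z (i + 1) - vtx n Z i)"

definition W_vec :: "nat \<Rightarrow> (nat \<Rightarrow> real^2) \<Rightarrow> nat \<Rightarrow> nat \<Rightarrow> real^2" where
  "W_vec n Z k i =
     (if i = k then a_coef n Z (int k + 1) *\<^sub>R (vtx n Z (int k) - vtx n Z (int k - 1))
      else if i = (k + 1) mod n then a_coef n Z (int k) *\<^sub>R (vtx n Z (int k + 2) - vtx n Z (int k + 1))
      else 0)"

end

theory Submission
  imports Defs
begin

lemma det2_add_left[simp]: "det2 (x + y) w = det2 x w + det2 y w"
  by (simp add: det2_def algebra_simps)
lemma det2_scale_left[simp]: "det2 (r *\<^sub>R x) w = r * det2 x w"
  by (simp add: det2_def algebra_simps)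
lemma det2_self[simp]: "det2 x x = 0"
  by (simp add: det2_def algebra_simps)
lemma det2_swap: "det2 x y = - det2 y x"
  by (simp add: det2_def algebra_simps)
lemma det2_zero[simp]: "det2 0 w = 0"
  by (simp add: det2_def)

lemma vtx_mod1: "vtx n Z (a mod int n) = vtx n Z a"
  by (simp add: vtx_def)
lemma vtx_mod_plus: "vtx n Z (a mod int n + d) = vtx n Z (a + d)"
  by (simp add: vtx_def mod_add_left_eq)
lemma vtx_mod_minus: "vtx n Z (a mod int n - d) = vtx n Z (a - d)"
  by (simp add: vtx_def mod_diff_left_eq)

lemma a_coef_mod: "a_coef n Z (j mod int n) = a_coef n Z j"
  by (simp add: a_coef_def vtx_mod1 vtx_mod_plus vtx_mod_minus)

lemma a_coef_mod_plus: "a_coef n Z (j mod int n + d) = a_coef n Z (j + d)"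
  by (metis a_coef_mod mod_add_left_eq)

lemma a_coef_nz:
  assumes "n > 0" "in_U n Z"
  shows "a_coef n Z j \<noteq> 0"
proof -
  let ?i = "nat (j mod int n)"
  have i: "?i < n" "int ?i = j mod int n" using assms(1) by (auto simp: nat_less_iff)
  have "a_coef n Z (int ?i) \<noteq> 0" using assms(2) i(1) unfolding in_U_def a_coef_def by blast
  then show ?thesis using i(2) a_coef_mod by metis
qed

lemma vtx_nat: "i < n \<Longrightarrow> vtx n w (int i) = w i"
  by (simp add: vtx_def)

lemma sum_W_nat:
  assumes "n \<ge> 3" "m < n" "p < n" "p \<noteq> m" "(p+1) mod n = m"
  shows "(\<Sum>k<n. c k *\<^sub>R W_vec n Z k m) = c m *\<^sub>R W_vec n Z m m + c p *\<^sub>R W_vec n Z p m"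
proof -
  have suc: "\<And>k. k < n \<Longrightarrow> (k+1) mod n = (if k + 1 = n then 0 else k + 1)"
    by auto
  have "(\<Sum>k<n. c k *\<^sub>R W_vec n Z k m) = (\<Sum>k\<in>{m,p}. c k *\<^sub>R W_vec n Z k m)"
  proof (rule sum.mono_neutral_right)
    show "\<forall>k\<in>{..<n} - {m, p}. c k *\<^sub>R W_vec n Z k m = 0"
    proof
      fix k assume k: "k \<in> {..<n} - {m, p}"
      have "(k+1) mod n \<noteq> m"
        using k assms suc[of k] suc[of p] by (auto split: if_splits)
      then show "c k *\<^sub>R W_vec n Z k m = 0" using k by (auto simp: W_vec_def)
    qed
  qed (use assms in auto)
  then show ?thesis using assms by simp
qed

lemma S_formula:
  assumes "n \<ge> 3"
  shows "vtx n (\<lambda>m. \<Sum>k<n. c k *\<^sub>R W_vec n Z k m) i =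
    (c (nat (i mod int n)) * a_coef n Z (i+1)) *\<^sub>R (vtx n Z i - vtx n Z (i-1))
    + (c (nat ((i - 1) mod int n)) * a_coef n Z (i-1)) *\<^sub>R (vtx n Z (i+1) - vtx n Z i)"
proof -
  define m where "m = nat (i mod int n)"
  define p where "p = nat ((i - 1) mod int n)"
  have n0: "int n > 0" using assms by simp
  have m: "m < n" "int m = i mod int n" using n0 by (auto simp: m_def nat_less_iff)
  have p: "p < n" "int p = (i - 1) mod int n" using n0 by (auto simp: p_def nat_less_iff)
  have pm: "(p+1) mod n = m"
  proof -
    have "int ((p+1) mod n) = (int p + 1) mod int n" by (simp add: zmod_int add.commute)
    also have "\<dots> = i mod int n" using p(2) by (simp add: mod_add_left_eq)
    finally show ?thesis using m(2) by simp
  qed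
  have pnm: "p \<noteq> m"
  proof
    assume "p = m"
    then have "(m + 1) mod n = m" using pm by simp
    moreover have "m + 1 < n \<or> m + 1 = n" using m(1) by auto
    ultimately show False using assms by auto
  qed
  have "vtx n (\<lambda>m. \<Sum>k<n. c k *\<^sub>R W_vec n Z k m) i = (\<Sum>k<n. c k *\<^sub>R W_vec n Z k m)"
    by (simp add: vtx_def m_def)
  also have "\<dots> = c m *\<^sub>R W_vec n Z m m + c p *\<^sub>R W_vec n Z p m"
    by (rule sum_W_nat[OF assms m(1) p(1) pnm pm])
  also have "W_vec n Z m m = a_coef n Z (i+1) *\<^sub>R (vtx n Z i - vtx n Z (i-1))"
    using m(2) by (simp add: W_vec_def vtx_mod_plus vtx_mod_minus vtx_mod1 a_coef_mod_plus)
  also have "W_vec n Z p m = a_coef n Z (i-1) *\<^sub>R (vtx n Z (i+1) - vtx n Z i)"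
  proof -
    have "W_vec n Z p m = a_coef n Z (int p) *\<^sub>R (vtx n Z (int p + 2) - vtx n Z (int p + 1))"
      using pnm pm by (simp add: W_vec_def)
    also have "\<dots> = a_coef n Z (i-1) *\<^sub>R (vtx n Z (i+1) - vtx n Z i)"
      using p(2) vtx_mod_plus[of n Z "i-1" 2] vtx_mod_plus[of n Z "i-1" 1] a_coef_mod[of n Z "i-1"]
      by (simp add: algebra_simps)
    finally show ?thesis .
  qed
  finally show ?thesis by (simp add: m_def p_def)
qed

lemma W_vec_out: "k < n \<Longrightarrow> n \<le> i \<Longrightarrow> W_vec n Z k i = 0"
proof -
  assume a: "k < n" "n \<le> i"
  then have "(k+1) mod n < n" by simp
  then have "i \<noteq> (k+1) mod n" "i \<noteq> k" using a by linarith+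
  then show ?thesis unfolding W_vec_def by simp
qed

lemma decomp:
  assumes "det2 u v \<noteq> 0"
  shows "w = (det2 w v / det2 u v) *\<^sub>R u + (det2 u w / det2 u v) *\<^sub>R v"
proof -
  have d: "u $ 1* v $ 2 - u $ 2* v $ 1 \<noteq> 0" using assms by (simp add: det2_def)
  have e1: "w $ 1 = ((w $ 1* v $ 2 - w $ 2* v $ 1) / (u $ 1* v $ 2 - u $ 2* v $ 1)) * u $ 1 + ((u $ 1* w $ 2 - u $ 2* w $ 1) / (u $ 1* v $ 2 - u $ 2* v $ 1)) * v $ 1"
    using d by (simp add: divide_simps) algebra
  have e2: "w $ 2 = ((w $ 1* v $ 2 - w $ 2* v $ 1) / (u $ 1* v $ 2 - u $ 2* v $ 1)) * u $ 2 + ((u $ 1* w $ 2 - u $ 2* w $ 1) / (u $ 1* v $ 2 - u $ 2* v $ 1)) * v $ 2"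
    using d by (simp add: divide_simps) algebra
  show ?thesis unfolding vec_eq_iff forall_2 det2_def using e1 e2 by simp
qed

theorem lemma2p4:
  fixes n :: nat and Z :: "nat \<Rightarrow> real^2"
  assumes "n \<ge> 3" and "in_U n Z"
  shows "(\<forall>c :: nat \<Rightarrow> real. (\<forall>i<n. (\<Sum>k<n. c k *\<^sub>R W_vec n Z k i) = 0) \<longrightarrow> (\<forall>k<n. c k = 0))
       \<and> birkhoff_fiber n Z = {w. \<exists>c :: nat \<Rightarrow> real. w = (\<lambda>i. \<Sum>k<n. c k *\<^sub>R W_vec n Z k i)}"
proof (intro conjI)
  show "\<forall>c :: nat \<Rightarrow> real. (\<forall>i<n. (\<Sum>k<n. c k *\<^sub>R W_vec n Z k i) = 0) \<longrightarrow> (\<forall>k<n. c k = 0)"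
  proof (rule allI, rule impI)
  have n0: "n > 0" using assms by simp
  have anz: "\<And>j. a_coef n Z j \<noteq> 0" using a_coef_nz[OF n0 assms(2)] .
  note SF = S_formula[OF assms(1)]
  fix c :: "nat \<Rightarrow> real"
  assume H: "\<forall>i<n. (\<Sum>k<n. c k *\<^sub>R W_vec n Z k i) = 0"
  show "\<forall>k<n. c k = 0"
  proof (intro allI impI)
    fix k assume k: "k < n"
    have "vtx n (\<lambda>m. \<Sum>k<n. c k *\<^sub>R W_vec n Z k m) (int k) = 0"
      using H k by (simp add: vtx_nat)
    then have "(c k * a_coef n Z (int k+1)) *\<^sub>R (vtx n Z (int k) - vtx n Z (int k-1))
    + (c (nat ((int k - 1) mod int n)) * a_coef n Z (int k-1)) *\<^sub>R (vtx n Z (int k+1) - vtx n Z (int k)) = 0"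
      using k SF[of c Z "int k"] by simp
    then have "det2 ((c k * a_coef n Z (int k+1)) *\<^sub>R (vtx n Z (int k) - vtx n Z (int k-1))
    + (c (nat ((int k - 1) mod int n)) * a_coef n Z (int k-1)) *\<^sub>R (vtx n Z (int k+1) - vtx n Z (int k)))
       (vtx n Z (int k+1) - vtx n Z (int k)) = 0" by simp
    then have "c k * a_coef n Z (int k+1) * a_coef n Z (int k) = 0"
      by (simp add: a_coef_def)
    then show "c k = 0" using anz by simp
  qed
  qed
next
  have n0: "n > 0" using assms by simp
  have anz: "\<And>j. a_coef n Z j \<noteq> 0" using a_coef_nz[OF n0 assms(2)] .
  note SF = S_formula[OF assms(1)]
  show "birkhoff_fiber n Z = {w. \<exists>c :: nat \<Rightarrow> real. w = (\<lambda>i. \<Sum>k<n. c k *\<^sub>R W_vec n Z k i)}"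
  proof (intro equalityI subsetI)
    fix w assume w: "w \<in> birkhoff_fiber n Z"
    let ?z = "vtx n Z" and ?a = "a_coef n Z"
    define C where "C j = det2 (vtx n w j) (?z (j+1) - ?z j) / (?a j * ?a (j+1))" for j
    have Cmod: "C (j mod int n) = C j" for j
      by (simp add: C_def vtx_mod1 vtx_mod_plus a_coef_mod a_coef_mod_plus)
    define c where "c k = C (int k)" for k
    have cc: "c (nat (j mod int n)) = C j" for j
      using n0 Cmod by (simp add: c_def)
    have "w = (\<lambda>i. \<Sum>k<n. c k *\<^sub>R W_vec n Z k i)"
    proof
      fix i
      show "w i = (\<Sum>k<n. c k *\<^sub>R W_vec n Z k i)"
      proof (cases "i < n")
        case False
        then show ?thesis using w by (simp add: birkhoff_fiber_def tangent_vec_def W_vec_out)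
      next
        case True
        let ?j = "int i"
        let ?u = "?z ?j - ?z (?j - 1)" and ?v = "?z (?j+1) - ?z ?j"
        have duv: "det2 ?u ?v = ?a ?j" by (simp add: a_coef_def)
        define p where "p = nat ((?j - 1) mod int n)"
        have p: "p < n" "int p = (?j - 1) mod int n" using n0 by (auto simp: p_def nat_less_iff)
        have "det2 (vtx n w (int p) + vtx n w (int p + 1)) (?z (int p + 1) - ?z (int p)) = 0"
          using w p(1) by (simp add: birkhoff_fiber_def)
        then have e: "det2 (vtx n w (?j - 1) + vtx n w ?j) ?u = 0"
          using p(2) vtx_mod_plus[of n _ "?j - 1" 1] vtx_mod1[of n _ "?j - 1"] by simp
        have S: "(\<Sum>k<n. c k *\<^sub>R W_vec n Z k i) =
          (C ?j * ?a (?j+1)) *\<^sub>R ?u + (C (?j - 1) * ?a (?j-1)) *\<^sub>R ?v"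
          using SF[of c Z ?j] True by (simp add: vtx_nat cc c_def Cmod)
        have "w i = (det2 (w i) ?v / det2 ?u ?v) *\<^sub>R ?u + (det2 ?u (w i) / det2 ?u ?v) *\<^sub>R ?v"
          by (rule decomp) (simp add: duv anz)
        also have "\<dots> = (C ?j * ?a (?j+1)) *\<^sub>R ?u + (C (?j - 1) * ?a (?j-1)) *\<^sub>R ?v"
        proof -
          have wi: "vtx n w ?j = w i" using True by (simp add: vtx_nat)
          have 1: "det2 (w i) ?v / det2 ?u ?v = C ?j * ?a (?j+1)"
            using anz[of ?j] anz[of "?j+1"] wi by (simp add: C_def duv)
          have 2: "det2 ?u (w i) / det2 ?u ?v = C (?j - 1) * ?a (?j-1)"
          proof -
            have e': "det2 (vtx n w (?j-1)) ?u = - det2 (w i) ?u" using e wi by simp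
            show ?thesis using anz[of ?j] anz[of "?j-1"] wi e' det2_swap[of ?u "w i"]
              by (simp add: C_def duv)
          qed
          show ?thesis using 1 2 by simp
        qed
        finally show ?thesis using S by simp
      qed
    qed
    then show "w \<in> {w. \<exists>c :: nat \<Rightarrow> real. w = (\<lambda>i. \<Sum>k<n. c k *\<^sub>R W_vec n Z k i)}" by blast
  next
    fix w assume "w \<in> {w. \<exists>c :: nat \<Rightarrow> real. w = (\<lambda>i. \<Sum>k<n. c k *\<^sub>R W_vec n Z k i)}"
    then obtain c where wc: "w = (\<lambda>i. \<Sum>k<n. c k *\<^sub>R W_vec n Z k i)" by blast
    have tan: "tangent_vec n w" unfolding tangent_vec_def wc by (simp add: W_vec_out)
    have "det2 (vtx n w (int i) + vtx n w (int i + 1)) (vtx n Z (int i + 1) - vtx n Z (int i)) = 0"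
      if i: "i < n" for i
    proof -
      let ?z = "vtx n Z" and ?a = "a_coef n Z" and ?j = "int i"
      let ?cc = "\<lambda>j. c (nat (j mod int n))"
      have A0: "det2 (?z ?j - ?z (?j - 1)) (?z (?j+1) - ?z ?j) = ?a ?j" by (simp add: a_coef_def)
      have A1: "det2 (?z (?j + 2) - ?z (?j + 1)) (?z (?j+1) - ?z ?j) = - ?a (?j + 1)"
        by (simp add: a_coef_def det2_swap[of "?z (?j + 2) - ?z (?j + 1)"] add.assoc)
      show ?thesis unfolding wc
        using SF[of c Z ?j] SF[of c Z "?j+1"] A0 A1
        by (simp add: add.assoc)
    qed
    then show "w \<in> birkhoff_fiber n Z" using tan by (simp add: birkhoff_fiber_def)
  qed
qed

end
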